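(* For every integer $n\ge5$, $3b(n)-\tfrac32\le \tilde m_{\mathrm{opt}}(n)<3b(n)+\tfrac12$; equivalently, $\tilde m_{\mathrm{opt}}(n)$ equals $\lceil 3b(n)-\frac32\rceil$ or $\lceil 3b(n)-\frac32\rceil+1$.
   Context: Let $b(n)=(1+\frac1n)\log_2(n+1)-1$. For $1\le m\le n$ put $E_m[\ell]=\sum_{j=0}^{m-1}\frac{n}{n-j}$ and $\tilde F(m)=\dfrac{2m\,b(n)+\frac12\sum_{j=1}^{m-1}\frac{j(j+1)}{n-j}}{E_m[\ell]}$. Let $\tilde m_{\mathrm{opt}}(n)$ be the smallest $m\in\{1,\dots,n\}$ minimizing $\tilde F(m)$. *)

theory Defs
  imports Complex_Main
begin

definition bfun :: "nat \<Rightarrow> real" where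
  "bfun n = (1 + 1 / real n) * log 2 (real n + 1) - 1"

definition Eell :: "nat \<Rightarrow> nat \<Rightarrow> real" where
  "Eell n m = (\<Sum>j = 0..<m. real n / (real n - real j))"

definition Ftilde :: "nat \<Rightarrow> nat \<Rightarrow> real" where
  "Ftilde n m = (2 * real m * bfun n
      + (1/2) * (\<Sum>j = 1..<m. real j * (real j + 1) / (real n - real j))) / Eell n m"

definition mopt :: "nat \<Rightarrow> nat" where
  "mopt n = (LEAST m. m \<in> {1..n} \<and> (\<forall>k \<in> {1..n}. Ftilde n m \<le> Ftilde n k))"

end

theory Submission
  imports Defs
begin


lemma log_le_frac:
  fixes x :: real and p q :: nat
  assumes "x > 0" "q > 0" "x ^ q \<le> 2 ^ p"
  shows "log 2 x \<le> real p / real q"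
proof -
  have "real q * log 2 x = log 2 (x ^ q)" using assms(1) by (simp add: log_nat_power)
  also have "\<dots> \<le> log 2 (2 ^ p)" using assms by (subst log_le_cancel_iff) auto
  also have "\<dots> = real p" by simp
  finally show ?thesis using assms(2) by (simp add: field_simps)
qed

lemma blk:
  fixes n A B p q :: nat
  assumes "A \<le> n" "n \<le> B" "(real B + 1) ^ q \<le> 2 ^ p" "q > 0" "A > 0"
    "3 * ((real A + 1) / real A)^2 * (real p / real q)^2 \<le> 4 * real A + 10"
  shows "3 * ((real n + 1) / real n)^2 * (log 2 (real n + 1))^2 \<le> 4 * real n + 10"
proof -
  have L0: "0 \<le> log 2 (real n + 1)" by simp
  have "log 2 (real n + 1) \<le> log 2 (real B + 1)" using assms by simp
  also have "\<dots> \<le> real p / real q" by (rule log_le_frac) (use assms in auto)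
  finally have L: "log 2 (real n + 1) \<le> real p / real q" .
  have a: "(real n + 1) / real n \<le> (real A + 1) / real A"
    using assms by (simp add: field_simps)
  have "3 * ((real n + 1) / real n)^2 * (log 2 (real n + 1))^2
     \<le> 3 * ((real A + 1) / real A)^2 * (real p / real q)^2"
    using a L L0 assms
    by (intro mult_mono power_mono mult_left_mono) (auto)
  also have "\<dots> \<le> 4 * real A + 10" by fact
  also have "\<dots> \<le> 4 * real n + 10" using assms by simp
  finally show ?thesis .
qed

lemma pow_sq: "j \<ge> 6 \<Longrightarrow> 64 * (real j + 1)^2 \<le> 49 * 2 ^ j"
proof (induction j rule: nat_induct_at_least)
  case base then show ?case by simp
next
  case (Suc j)
  have "64 * (real (Suc j) + 1)^2 \<le> 2 * (64 * (real j + 1)^2)"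
  proof -
    have "36 \<le> real j * real j" using Suc.hyps mult_mono[of 6 "real j" 6 "real j"] by simp
    then show ?thesis by (simp add: power2_eq_square algebra_simps)
  qed
  also have "\<dots> \<le> 2 * (49 * 2 ^ j)" using Suc.IH by simp
  finally show ?case by simp
qed

lemma big:
  fixes n :: nat assumes "n \<ge> 64"
  shows "3 * ((real n + 1) / real n)^2 * (log 2 (real n + 1))^2 \<le> 4 * real n + 10"
proof -
  obtain j where j: "2^j \<le> n" "n < 2^(j+1)" using ex_power_ivl1[of 2 n] assms by auto
  have "j \<ge> 6"
  proof (rule ccontr)
    assume "\<not> j \<ge> 6" then have "j + 1 \<le> 6" by simp
    then have "(2::nat)^(j+1) \<le> 2^6" by (rule power_increasing) simp
    with j assms show False by simp
  qed
  have jr: "2 ^ j \<le> real n" proof -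
    have "real ((2::nat)^j) \<le> real n" using j(1) by (rule of_nat_mono)
    then show ?thesis by simp
  qed
  have j2: "n + 1 \<le> 2^(j+1)" using j(2) by simp
  have j2r: "real n + 1 \<le> 2^(j+1)"
  proof -
    have "real (n + 1) \<le> real ((2::nat)^(j+1))" using j2 by (rule of_nat_mono)
    then show ?thesis by simp
  qed
  have "log 2 (real n + 1) \<le> real (j+1) / real (1::nat)"
    by (rule log_le_frac) (use j2r in auto)
  then have L: "log 2 (real n + 1) \<le> real j + 1" by simp
  have L0: "0 \<le> log 2 (real n + 1)" by simp
  have a: "(real n + 1) / real n \<le> 65/64" using assms by (simp add: field_simps)
  have a0: "0 \<le> (real n + 1) / real n" by simp
  have "3 * ((real n + 1) / real n)^2 * (log 2 (real n + 1))^2 \<le> 3 * (65/64)^2 * (real j + 1)^2"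
    using a L L0 a0 by (intro mult_mono power_mono mult_left_mono) auto
  also have "\<dots> \<le> 3 * (65/64)^2 * (49/64 * 2^j)" using pow_sq[OF \<open>j \<ge> 6\<close>] by simp
  also have "\<dots> \<le> 4 * real n + 10"
  proof -
    have eq: "3 * (65/64)^2 * (49/64 * (2::real)^j) = (621075/262144) * 2^j"
      by (simp add: power2_eq_square)
    have "0 \<le> (2::real)^j" by simp
    then show ?thesis unfolding eq using jr by linarith
  qed
  finally show ?thesis .
qed

lemma logfact:
  fixes n :: nat assumes "n \<ge> 5"
  shows "3 * (bfun n + 1)^2 \<le> 4 * real n + 10"
proof -
  have e: "bfun n + 1 = ((real n + 1) / real n) * log 2 (real n + 1)"
    using assms by (simp add: bfun_def field_simps)
  have "3 * ((real n + 1) / real n)^2 * (log 2 (real n + 1))^2 \<le> 4 * real n + 10"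
  proof -
    consider "n = 5" | "n = 6" | "n = 7" | "n = 8" | "9 \<le> n \<and> n \<le> 10" | "11 \<le> n \<and> n \<le> 13"
      | "14 \<le> n \<and> n \<le> 19" | "20 \<le> n \<and> n \<le> 35" | "36 \<le> n \<and> n \<le> 116" | "n \<ge> 64"
      using assms by linarith
    then show ?thesis
    proof cases
      case 1 then show ?thesis using blk[of 5 n 5 5 13] by (simp add: power_divide)
    next
      case 2 then show ?thesis using blk[of 6 n 6 6 17] by (simp add: power_divide)
    next
      case 3 then show ?thesis using blk[of 7 n 7 1 3] by (simp add: power_divide)
    next
      case 4 then show ?thesis using blk[of 8 n 8 5 16] by (simp add: power_divide)
    next
      case 5 then show ?thesis using blk[of 9 n 10 2 7] by (simp add: power_divide)
    next
      case 6 then show ?thesis using blk[of 11 n 13 6 23] by (simp add: power_divide)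
    next
      case 7 then show ?thesis using blk[of 14 n 19 3 13] by (simp add: power_divide)
    next
      case 8 then show ?thesis using blk[of 20 n 35 5 26] by (simp add: power_divide)
    next
      case 9 then show ?thesis using blk[of 36 n 116 8 55] by (simp add: power_divide)
    next
      case 10 then show ?thesis using big by simp
    qed
  qed
  moreover have "(bfun n + 1)^2 = ((real n + 1) / real n)^2 * (log 2 (real n + 1))^2"
    unfolding e by (rule power_mult_distrib)
  ultimately show ?thesis by simp
qed



definition gg :: "nat \<Rightarrow> nat \<Rightarrow> real" where
  "gg n j = real n / (real n - real j)"

definition Nn :: "nat \<Rightarrow> nat \<Rightarrow> real" where
  "Nn n m = 2 * real m * bfun n + (1/2) * (\<Sum>j = 1..<m. real j * (real j + 1) / (real n - real j))"

definition Dd :: "nat \<Rightarrow> nat \<Rightarrow> real" where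
  "Dd n m = (\<Sum>j<m. gg n j * ((real m - real j) * (4 * bfun n - real m - 1 - real j) / 2))"

lemma Ftilde_eq: "Ftilde n m = Nn n m / Eell n m"
  by (simp add: Ftilde_def Nn_def)

lemma Eell_alt: "Eell n m = (\<Sum>j<m. gg n j)"
  by (simp add: Eell_def gg_def atLeast0LessThan)

lemma Eell_Suc: "Eell n (Suc m) = Eell n m + real n / (real n - real m)"
  by (simp add: Eell_def)

lemma Nn_Suc: "Nn n (Suc m) = Nn n m + 2 * bfun n + (1/2) * (real m * (real m + 1) / (real n - real m))"
proof (cases "m = 0")
  case True then show ?thesis by (simp add: Nn_def)
next
  case False
  then have "(\<Sum>j = 1..<Suc m. real j * (real j + 1) / (real n - real j))
     = (\<Sum>j = 1..<m. real j * (real j + 1) / (real n - real j)) + real m * (real m + 1) / (real n - real m)"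
    by (subst sum.atLeastLessThan_Suc) auto
  then show ?thesis by (simp add: Nn_def algebra_simps)
qed

lemma Dd_Suc: "Dd n (Suc m) = Dd n m + (2 * bfun n - real m - 1) * Eell n (Suc m)"
proof -
  have e1: "Dd n m = (\<Sum>j<Suc m. gg n j * ((real m - real j) * (4 * bfun n - real m - 1 - real j) / 2))"
    by (simp add: Dd_def)
  have e2: "Dd n (Suc m) = (\<Sum>j<Suc m. gg n j * ((real m - real j) * (4 * bfun n - real m - 1 - real j) / 2)
      + gg n j * (2 * bfun n - real m - 1))"
    unfolding Dd_def by (rule sum.cong) (auto simp: field_simps)
  have e3: "(\<Sum>j<Suc m. gg n j * (2 * bfun n - real m - 1)) = (2 * bfun n - real m - 1) * (\<Sum>j<Suc m. gg n j)"
    unfolding sum_distrib_left by (simp only: mult.commute)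
  show ?thesis unfolding e2 e1 sum.distrib Eell_alt e3 ..
qed

lemma alg1:
  fixes n m d N E b :: real
  assumes "d \<noteq> 0" "n = d + m"
  shows "n * (N + 2 * b + (1/2) * (m * (m + 1) / d)) - (2 * b * (n - (1 + m)) + (1 + m) * (1 + m + 1) / 2) * (E + n / d)
    = (n * N - (2 * b * (n - m) + m * (m + 1) / 2) * E) + (2 * b - (m + 1)) * (E + n / d)"
proof -
  have "n * (m * (m + 1) / d) / 2 - (2 * b * (n - (1 + m)) + (1 + m) * (1 + m + 1) / 2) * (n / d)
     = (2 * b - (m + 1)) * (n / d) - 2 * b * n"
    using assms by (simp add: field_simps)
  then show ?thesis using assms by (simp add: field_simps)
qed

lemma Did: "m \<le> n \<Longrightarrow>
  real n * Nn n m - (2 * bfun n * (real n - real m) + real m * (real m + 1) / 2) * Eell n m = Dd n m"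
proof (induction m)
  case 0 then show ?case by (simp add: Nn_def Eell_def Dd_def)
next
  case (Suc m)
  then have IH: "Dd n m = real n * Nn n m - (2 * bfun n * (real n - real m) + real m * (real m + 1) / 2) * Eell n m"
    by simp
  have d: "real n - real m \<noteq> 0" using Suc.prems by simp
  have "real n * Nn n (Suc m) - (2 * bfun n * (real n - real (Suc m)) + real (Suc m) * (real (Suc m) + 1) / 2) * Eell n (Suc m)
    = (real n * Nn n m - (2 * bfun n * (real n - real m) + real m * (real m + 1) / 2) * Eell n m) + (2 * bfun n - (real m + 1)) * (Eell n m + real n / (real n - real m))"
    unfolding Nn_Suc Eell_Suc of_nat_Suc by (rule alg1) (use d in auto)
  then show ?case unfolding Dd_Suc IH Eell_Suc by (simp add: algebra_simps)
qed



lemma Eell_pos: assumes "1 \<le> m" "m \<le> n" shows "Eell n m > 0"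
proof -
  have ne: "{..<m} \<noteq> {}" using assms by (simp add: lessThan_empty_iff)
  have "\<And>j. j \<in> {..<m} \<Longrightarrow> gg n j > 0" using assms unfolding gg_def by auto
  then show ?thesis unfolding Eell_alt by (intro sum_pos[OF _ ne]) auto
qed

lemma alg2:
  fixes d E E' N D n m b :: real
  assumes "d > 0" "E > 0" "E' = E + n / d" "E' > 0" "D = n * N - (2 * b * d + m * (m + 1) / 2) * E"
  shows "(N + 2 * b + (1/2) * (m * (m + 1) / d)) / E' - N / E = - D / (d * E * E')"
proof -
  define N' where "N' = N + 2 * b + (1/2) * (m * (m + 1) / d)"
  have E'0: "E' \<noteq> 0" using assms by simp
  have E0: "E \<noteq> 0" using assms by simp
  have k1: "N' / E' - N / E = (N' * E - N * E') / (E * E')"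
    using E0 E'0 by (simp add: field_simps)
  have k2: "N' * E - N * E' = - D / d"
    using assms(1) unfolding N'_def assms(3,5) by (simp add: field_simps)
  show ?thesis unfolding N'_def[symmetric] k1 k2 using assms(1) by (simp add: field_simps)
qed

lemma Fstep:
  assumes "1 \<le> m" "m < n"
  shows "Ftilde n (Suc m) - Ftilde n m = - Dd n m / ((real n - real m) * Eell n m * Eell n (Suc m))"
proof -
  have E: "Eell n m > 0" using assms Eell_pos by simp
  have E': "Eell n (Suc m) > 0" using assms Eell_pos by simp
  have d: "real n - real m > 0" using assms by simp
  show ?thesis unfolding Ftilde_eq Nn_Suc
    by (rule alg2[OF d E Eell_Suc E' Did[symmetric]]) (use assms in simp)
qed

lemma Fdec: assumes "1 \<le> m" "m < n" "Dd n m > 0" shows "Ftilde n (Suc m) < Ftilde n m"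
proof -
  have E: "Eell n m > 0" using assms Eell_pos by simp
  have E': "Eell n (Suc m) > 0" using assms Eell_pos by simp
  have d: "real n - real m > 0" using assms by simp
  have "Dd n m / ((real n - real m) * Eell n m * Eell n (Suc m)) > 0"
    using E E' d assms by (intro divide_pos_pos mult_pos_pos) auto
  then show ?thesis using Fstep[OF assms(1,2)] by simp
qed

lemma Finc: assumes "1 \<le> m" "m < n" "Dd n m \<le> 0" shows "Ftilde n m \<le> Ftilde n (Suc m)"
proof -
  have E: "Eell n m > 0" using assms Eell_pos by simp
  have E': "Eell n (Suc m) > 0" using assms Eell_pos by simp
  have d: "real n - real m > 0" using assms by simp
  have "Dd n m / ((real n - real m) * Eell n m * Eell n (Suc m)) \<le> 0"
    using E E' d assms by (intro divide_nonpos_pos mult_pos_pos) auto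
  then show ?thesis using Fstep[OF assms(1,2)] by simp
qed

lemma sum_tj: "(\<Sum>j<k. t - real j) = real k * t - real k * (real k - 1) / 2"
proof (induction k)
  case 0 then show ?case by simp
next
  case (Suc k)
  have "(\<Sum>j<Suc k. t - real j) = (\<Sum>j<k. t - real j) + (t - real k)" by simp
  then show ?case unfolding Suc.IH by (simp add: field_simps)
qed

lemma sumform: "(\<Sum>j<m. (real m - real j) * (t - real j)) = real m * (real m + 1) * (3 * t - real m + 1) / 6"
proof (induction m)
  case 0 then show ?case by simp
next
  case (Suc m)
  have "(\<Sum>j<Suc m. (real (Suc m) - real j) * (t - real j))
      = (\<Sum>j<Suc m. (real m - real j) * (t - real j)) + (\<Sum>j<Suc m. t - real j)"
    by (simp add: sum.distrib[symmetric] algebra_simps)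
  also have "\<dots> = (\<Sum>j<m. (real m - real j) * (t - real j)) + (\<Sum>j<Suc m. t - real j)"
    by simp
  also have "\<dots> = real (Suc m) * (real (Suc m) + 1) * (3 * t - real (Suc m) + 1) / 6"
    unfolding Suc.IH sum_tj by (simp add: field_simps)
  finally show ?case .
qed

lemma upper:
  assumes "1 \<le> m" "m < n" "6 * bfun n \<le> 2 * real m + 1"
  shows "Dd n m \<le> 0"
proof -
  define \<theta> where "\<theta> = 4 * bfun n - real m - 1"
  have \<theta>le: "3 * \<theta> \<le> real m - 1" using assms(3) unfolding \<theta>_def by (simp add: algebra_simps)
  have n\<theta>: "real n - \<theta> > 0" using \<theta>le assms(2) by linarith
  define gs where "gs = real n / (real n - \<theta>)"
  have gs: "gs > 0" using n\<theta> assms unfolding gs_def by (intro divide_pos_pos) auto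
  have trm: "gg n j * ((real m - real j) * (\<theta> - real j) / 2) \<le> gs * ((real m - real j) * (\<theta> - real j) / 2)"
    if j: "j \<in> {..<m}" for j
  proof -
    have nj: "real n - real j > 0" using j assms by simp
    have mj: "real m - real j \<ge> 0" using j by simp
    define Q where "Q = (real n - real j) * (real n - \<theta>)"
    have Q: "Q > 0" unfolding Q_def using nj n\<theta> by simp
    have diff: "gg n j - gs = (real n / Q) * (real j - \<theta>)"
      using nj n\<theta> unfolding gg_def gs_def Q_def by (simp add: field_simps)
    have "(gg n j - gs) * ((real m - real j) * (\<theta> - real j) / 2)
        = (real n / Q) * ((real m - real j) / 2) * ((real j - \<theta>) * (\<theta> - real j))"
      unfolding diff using Q by (simp add: field_simps)
    also have "\<dots> \<le> 0"
    proof (rule mult_nonneg_nonpos)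
      show "0 \<le> real n / Q * ((real m - real j) / 2)" using Q mj by simp
      have "(real j - \<theta>) * (\<theta> - real j) = - ((real j - \<theta>)^2)" by (simp add: power2_eq_square algebra_simps)
      then show "(real j - \<theta>) * (\<theta> - real j) \<le> 0" by simp
    qed
    finally have "(gg n j - gs) * ((real m - real j) * (\<theta> - real j) / 2) \<le> 0" .
    then show ?thesis by (simp only: left_diff_distrib diff_le_0_iff_le)
  qed
  have "Dd n m = (\<Sum>j<m. gg n j * ((real m - real j) * (\<theta> - real j) / 2))"
    unfolding Dd_def \<theta>_def ..
  also have "\<dots> \<le> (\<Sum>j<m. gs * ((real m - real j) * (\<theta> - real j) / 2))"
    by (rule sum_mono) (rule trm)
  also have "\<dots> = gs * ((\<Sum>j<m. (real m - real j) * (\<theta> - real j)) / 2)"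
    by (simp add: sum_distrib_left sum_divide_distrib)
  also have "\<dots> = gs * (real m * (real m + 1) * (3 * \<theta> - real m + 1) / 12)"
    unfolding sumform by simp
  also have "\<dots> \<le> 0"
  proof -
    have "real m * (real m + 1) * (3 * \<theta> - real m + 1) \<le> 0"
      using \<theta>le by (intro mult_nonneg_nonpos) auto
    then show ?thesis using gs by (simp add: mult_nonneg_nonpos)
  qed
  finally show ?thesis .
qed



lemma Dk: "Dd n m = (\<Sum>k=1..m. (2 * bfun n - real k) * Eell n k)"
proof (induction m)
  case 0 then show ?case by (simp add: Dd_def)
next
  case (Suc m) then show ?case by (simp add: Dd_Suc algebra_simps)
qed

definition uu :: "nat \<Rightarrow> nat \<Rightarrow> real" where
  "uu n k = (\<Sum>j<k. real j / (real n - real j))"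

lemma Eell_u: "k \<le> n \<Longrightarrow> Eell n k = real k + uu n k"
proof -
  assume k: "k \<le> n"
  have "Eell n k = (\<Sum>j<k. 1 + real j / (real n - real j))"
    unfolding Eell_alt gg_def by (rule sum.cong) (use k in \<open>auto simp: field_simps\<close>)
  then show ?thesis by (simp add: sum.distrib uu_def)
qed

lemma uu_nonneg: "k \<le> n \<Longrightarrow> 0 \<le> uu n k"
  unfolding uu_def by (intro sum_nonneg) auto

lemma uu_mono: "k \<le> m \<Longrightarrow> m \<le> n \<Longrightarrow> uu n k \<le> uu n m"
  unfolding uu_def by (intro sum_mono2) auto

lemma sum_j: "(\<Sum>j<m. real j) = real m * (real m - 1) / 2"
proof (induction m)
  case 0 then show ?case by simp
next
  case (Suc m) then show ?case by (simp add: field_simps)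
qed

lemma uu_bound:
  assumes "1 \<le> m" "m \<le> n"
  shows "uu n m \<le> real m * (real m - 1) / (2 * (real n - real m + 1))"
proof -
  have d: "real n - real m + 1 > 0" using assms by simp
  have "uu n m \<le> (\<Sum>j<m. real j / (real n - real m + 1))"
    unfolding uu_def
  proof (rule sum_mono)
    fix j assume j: "j \<in> {..<m}"
    then have "real n - real m + 1 \<le> real n - real j" by simp
    then show "real j / (real n - real j) \<le> real j / (real n - real m + 1)"
      using d by (intro divide_left_mono) auto
  qed
  also have "\<dots> = (\<Sum>j<m. real j) / (real n - real m + 1)"
    by (simp add: sum_divide_distrib)
  also have "\<dots> = real m * (real m - 1) / (2 * (real n - real m + 1))"
    unfolding sum_j by simp
  finally show ?thesis .
qed

lemma Asum: "(\<Sum>k=1..m. (2 * b - real k) * real k) = real m * (real m + 1) * (6 * b - 2 * real m - 1) / 6"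
proof (induction m)
  case 0 then show ?case by simp
next
  case (Suc m) then show ?case by (simp add: field_simps)
qed

lemma negpart: "(\<Sum>k=1..m. max 0 (real k - c)) \<le> (real m - c + 1/2)^2 / 2"
proof (induction m)
  case 0 then show ?case by simp
next
  case (Suc m)
  show ?case
  proof (cases "real (Suc m) > c")
    case True
    have "(\<Sum>k=1..Suc m. max 0 (real k - c)) = (\<Sum>k=1..m. max 0 (real k - c)) + (real m + 1 - c)"
      using True by simp
    also have "\<dots> \<le> (real m - c + 1/2)^2 / 2 + (real m + 1 - c)" using Suc.IH by simp
    also have "\<dots> = (real (Suc m) - c + 1/2)^2 / 2" by (simp add: power2_eq_square field_simps)
    finally show ?thesis .
  next
    case False
    have "(\<Sum>k=1..Suc m. max 0 (real k - c)) = 0"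
      using False by (intro sum.neutral) auto
    then show ?thesis by simp
  qed
qed

lemma negzero: "real m \<le> c \<Longrightarrow> (\<Sum>k=1..m. max 0 (real k - c)) = 0"
  by (intro sum.neutral) auto

lemma final_ineq:
  fixes b x m d U P :: real
  assumes m1: "m \<ge> 1" and d: "d > 0" and x0: "0 < x" and xb: "x < b - 1"
    and h: "3 * (b - 1)^2 < 4 * d"
    and U: "0 \<le> U" "U \<le> m * (m - 1) / (2 * d)" and P: "0 \<le> P" "P \<le> x^2 / 2"
  shows "U * P < m * (m + 1) * (2 * b - 2 * x) / 6"
proof -
  have x2: "x^2 < (b - 1)^2" using x0 xb by (intro power_strict_mono) auto
  have h1: "3 * x^2 < 4 * d" using x2 h by linarith
  have h2: "3 * (m - 1) * x^2 < 4 * (m + 1) * d * (b - x)"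
  proof -
    have "3 * (m - 1) * x^2 \<le> 3 * (m + 1) * x^2" by (simp add: mult_right_mono)
    also have "\<dots> = (m + 1) * (3 * x^2)" by simp
    also have "\<dots> < (m + 1) * (4 * d)" using h1 m1 by (intro mult_strict_left_mono) auto
    also have "\<dots> = (m + 1) * (4 * d) * 1" by simp
    also have "\<dots> \<le> (m + 1) * (4 * d) * (b - x)"
      by (rule mult_left_mono) (use xb m1 d in auto)
    finally show ?thesis by (simp add: algebra_simps)
  qed
  have "U * P \<le> (m * (m - 1) / (2 * d)) * (x^2 / 2)"
    using U P by (intro mult_mono) auto
  also have "\<dots> = m * (3 * (m - 1) * x^2) / (12 * d)" using d by (simp add: field_simps)
  also have "\<dots> < m * (4 * (m + 1) * d * (b - x)) / (12 * d)"
    using h2 m1 d by (intro divide_strict_right_mono mult_strict_left_mono) auto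
  also have "\<dots> = m * (m + 1) * (2 * b - 2 * x) / 6" using d by (simp add: field_simps)
  finally show ?thesis .
qed

lemma lower:
  assumes "1 \<le> m" "m < n" "2 * real m + 3 < 6 * bfun n" "3 * (bfun n + 1)^2 \<le> 4 * real n + 10"
  shows "Dd n m > 0"
proof -
  define b where "b = bfun n"
  define A where "A = real m * (real m + 1) * (6 * b - 2 * real m - 1) / 6"
  define P where "P = (\<Sum>k=1..m. max 0 (real k - 2 * b))"
  have Apos: "A > 0" unfolding A_def using assms(1,3) b_def by (intro divide_pos_pos mult_pos_pos) auto
  have split: "Dd n m = A + (\<Sum>k=1..m. (2 * b - real k) * uu n k)"
  proof -
    have "Dd n m = (\<Sum>k=1..m. (2 * b - real k) * real k + (2 * b - real k) * uu n k)"
      unfolding Dk b_def by (rule sum.cong) (use assms in \<open>auto simp: Eell_u algebra_simps\<close>)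
    then show ?thesis unfolding sum.distrib A_def Asum .
  qed
  have neg: "- (uu n m * P) \<le> (\<Sum>k=1..m. (2 * b - real k) * uu n k)"
  proof -
    have "- (uu n m * P) = (\<Sum>k=1..m. - (uu n m * max 0 (real k - 2 * b)))"
      unfolding P_def by (simp add: sum_distrib_left sum_negf)
    also have "\<dots> \<le> (\<Sum>k=1..m. (2 * b - real k) * uu n k)"
    proof (rule sum_mono)
      fix k assume k: "k \<in> {1..m}"
      have u0: "0 \<le> uu n k" using k assms by (intro uu_nonneg) auto
      have um: "uu n k \<le> uu n m" using k assms by (intro uu_mono) auto
      show "- (uu n m * max 0 (real k - 2 * b)) \<le> (2 * b - real k) * uu n k"
      proof (cases "real k \<le> 2 * b")
        case True
        then show ?thesis using u0 um by simp
      next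
        case False
        then have "(real k - 2 * b) * uu n k \<le> (real k - 2 * b) * uu n m"
          using um by (intro mult_left_mono) auto
        then show ?thesis using False by (simp add: algebra_simps)
      qed
    qed
    finally show ?thesis .
  qed
  show ?thesis
  proof (cases "real m \<le> 2 * b")
    case True
    then have "P = 0" unfolding P_def by (rule negzero)
    then show ?thesis using split neg Apos by simp
  next
    case False
    define x where "x = real m - 2 * b + 1/2"
    define d where "d = real n - real m + 1"
    have x0: "0 < x" using False x_def by simp
    have xb: "x < b - 1" using assms(3) x_def b_def by simp
    have d0: "d > 0" using assms d_def by simp
    have h: "3 * (b - 1)^2 < 4 * d"
    proof -
      have "3 * (b + 1)^2 \<le> 4 * real n + 10" using assms(4) b_def by simp
      then have "3 * (b * b) + 6 * b + 3 \<le> 4 * real n + 10" by (simp add: power2_eq_square algebra_simps)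
      moreover have "3 * (b - 1)^2 = 3 * (b * b) - 6 * b + 3" by (simp add: power2_eq_square algebra_simps)
      ultimately show ?thesis using assms(3) b_def d_def by linarith
    qed
    have U: "0 \<le> uu n m" "uu n m \<le> real m * (real m - 1) / (2 * d)"
      using uu_nonneg[of m n] uu_bound[of m n] assms d_def by auto
    have Pb: "0 \<le> P" "P \<le> x^2 / 2"
      unfolding P_def x_def using negpart[where c="2 * b" and m=m] by (auto intro: sum_nonneg simp: algebra_simps)
    have "uu n m * P < real m * (real m + 1) * (2 * b - 2 * x) / 6"
      by (rule final_ineq[OF _ d0 x0 xb h U Pb]) (use assms in simp)
    also have "\<dots> = A" unfolding A_def x_def by (simp add: algebra_simps)
    finally show ?thesis using split neg by linarith
  qed
qed



theorem mainTheorem3: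
  fixes n :: nat
  assumes "n \<ge> 5"
  shows "3 * bfun n - 3/2 \<le> real (mopt n) \<and> real (mopt n) < 3 * bfun n + 1/2"
proof -
  define b where "b = bfun n"
  define F where "F = Ftilde n"
  have L2: "2 \<le> log 2 (real n + 1)"
  proof -
    have "log 2 ((2::real)^2) \<le> log 2 (real n + 1)"
      using assms by (subst log_le_cancel_iff) auto
    moreover have "log 2 ((2::real)^2) = 2" using log_pow_cancel[of "2::real" 2] by simp
    ultimately show ?thesis by linarith
  qed
  have hb: "b \<ge> 1"
  proof -
    have "log 2 (real n + 1) \<le> (1 + 1 / real n) * log 2 (real n + 1)"
      using L2 by (simp add: algebra_simps)
    then show ?thesis unfolding b_def bfun_def using L2 by simp
  qed
  have LF: "3 * (b + 1)^2 \<le> 4 * real n + 10" using logfact[OF assms] b_def by simp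
  have hn: "3 * b - 3/2 \<le> real n"
  proof (rule ccontr)
    assume "\<not> ?thesis"
    then have c: "real n + 9/2 < 3 * (b + 1)" by simp
    have "(real n + 9/2)^2 < (3 * (b + 1))^2"
      using c by (intro power_strict_mono) auto
    moreover have "real n * real n \<ge> 5 * real n" using assms by (intro mult_right_mono) auto
    moreover have "(real n + 9/2)^2 = real n * real n + 9 * real n + 81/4" by (simp add: power2_eq_square algebra_simps)
    moreover have "(3 * (b + 1))^2 = 9 * (b * b) + 18 * b + 9" by (simp add: power2_eq_square algebra_simps)
    moreover have "(b + 1)^2 = b * b + 2 * b + 1" by (simp add: power2_eq_square algebra_simps)
    moreover have "real n \<ge> 5" using assms by simp
    ultimately show False using LF by linarith
  qed
  define P where "P = (\<lambda>m. m \<in> {1..n} \<and> (\<forall>k \<in> {1..n}. F m \<le> F k))"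
  have mopt_eq: "mopt n = (LEAST m. P m)" unfolding mopt_def P_def F_def ..
  obtain m0 where m0: "P m0"
  proof -
    have fin: "finite (F ` {1..n})" and ne: "F ` {1..n} \<noteq> {}" using assms by auto
    obtain m0 where m0: "m0 \<in> {1..n}" "F m0 = Min (F ` {1..n})"
      using Min_in[OF fin ne] by auto
    have "\<forall>k\<in>{1..n}. F m0 \<le> F k" unfolding m0(2) using fin by auto
    then have "P m0" unfolding P_def using m0(1) by blast
    then show ?thesis by (rule that)
  qed
  define mo where "mo = mopt n"
  have Pmo: "P mo" unfolding mo_def mopt_eq by (rule LeastI[of P, OF m0])
  have least: "\<And>m. P m \<Longrightarrow> mo \<le> m" unfolding mo_def mopt_eq by (rule Least_le)
  have mo1: "1 \<le> mo" "mo \<le> n" and moF: "\<And>k. k \<in> {1..n} \<Longrightarrow> F mo \<le> F k"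
    using Pmo unfolding P_def by auto
  have lowb: "3 * b - 3/2 \<le> real mo"
  proof (rule ccontr)
    assume a: "\<not> ?thesis"
    have "mo \<noteq> n" using a hn by auto
    then have mn: "mo < n" using mo1 by simp
    have "Dd n mo > 0" using lower[OF mo1(1) mn] a LF b_def by simp
    then have "F (Suc mo) < F mo" unfolding F_def using Fdec[OF mo1(1) mn] by simp
    moreover have "F mo \<le> F (Suc mo)" using moF mn by simp
    ultimately show False by simp
  qed
  have upb: "real mo < 3 * b + 1/2"
  proof (rule ccontr)
    assume a: "\<not> ?thesis"
    then have a': "3 * b + 1/2 \<le> real mo" by simp
    define m' where "m' = mo - 1"
    have mo2: "mo \<ge> 2" using a' hb by simp
    then have m'r: "real m' = real mo - 1" "Suc m' = mo" unfolding m'_def by auto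
    have m'1: "1 \<le> m'" "m' < n" using mo2 mo1 m'_def by auto
    have "Dd n m' \<le> 0" using upper[OF m'1] a' m'r b_def by simp
    then have Fm': "F m' \<le> F mo" using Finc[OF m'1] m'r unfolding F_def by simp
    have "P m'" unfolding P_def using m'1 Fm' moF by force
    then have "mo \<le> m'" by (rule least)
    then show False using m'r by simp
  qed
  show ?thesis using lowb upb unfolding mo_def b_def by simp
qed


end
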